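(* Let $\mathds{k}$ be an algebraically closed field, $A$ a finite abelian group, $\omega$ a normalized 3-cocycle on $A$ with values in $\mathds{k}^{\times}$, $B$ a finite abelian group, $f:B\to A$ a homomorphism with kernel $K$, and $\phi:B\times B\to\mathds{k}^\times$ a 2-cochain with $d\phi=f^*\omega^{-1}$. Then the function $Bil(\phi):B\times K\rightarrow \mathds{k}^{\times}$ given by $Bil(\phi)(b,k):=\phi(b,k)/\phi(k,b)$ is bilinear.
   Context: For a 2-cochain $\kappa$ on an abelian group, $(d\kappa)(a,b,c)=\kappa(b,c)\kappa(a+b,c)^{-1}\kappa(a,b+c)\kappa(a,b)^{-1}$; $(f^*\omega^{-1})(b,c,d)=\omega(f(b),f(c),f(d))^{-1}$. Normalized means $\omega(a,b,c)=1$ whenever one of $a,b,c$ is $0$. *)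

theory Defs
  imports "HOL-Computational_Algebra.Polynomial"
begin

text \<open>Coboundary of a 2-cochain on an abelian group, with values in the multiplicative
group of a field (values assumed nonzero separately).\<close>
definition d2 :: "('b::ab_group_add \<Rightarrow> 'b \<Rightarrow> 'k::field) \<Rightarrow> 'b \<Rightarrow> 'b \<Rightarrow> 'b \<Rightarrow> 'k" where
  "d2 \<kappa> a b c = \<kappa> b c * inverse (\<kappa> (a + b) c) * \<kappa> a (b + c) * inverse (\<kappa> a b)"

definition d3 :: "('a::ab_group_add \<Rightarrow> 'a \<Rightarrow> 'a \<Rightarrow> 'k::field) \<Rightarrow> 'a \<Rightarrow> 'a \<Rightarrow> 'a \<Rightarrow> 'a \<Rightarrow> 'k" where
  "d3 \<omega> a b c e = \<omega> b c e * inverse (\<omega> (a + b) c e) * \<omega> a (b + c) e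
                  * inverse (\<omega> a b (c + e)) * \<omega> a b c"

definition normalized_3cocycle :: "('a::ab_group_add \<Rightarrow> 'a \<Rightarrow> 'a \<Rightarrow> 'k::field) \<Rightarrow> bool" where
  "normalized_3cocycle \<omega> \<longleftrightarrow>
     (\<forall>a b c. \<omega> a b c \<noteq> 0) \<and>
     (\<forall>a b c e. d3 \<omega> a b c e = 1) \<and>
     (\<forall>a b c. (a = 0 \<or> b = 0 \<or> c = 0) \<longrightarrow> \<omega> a b c = 1)"

definition Bil :: "('b \<Rightarrow> 'b \<Rightarrow> 'k::field) \<Rightarrow> 'b \<Rightarrow> 'b \<Rightarrow> 'k" where
  "Bil \<phi> b k = \<phi> b k / \<phi> k b"

end

theory Submission
  imports Defs
begin

lemma alg1:
  fixes L M A B C D X Y Z :: "'k::field"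
  assumes "A \<noteq> 0" "B \<noteq> 0" "C \<noteq> 0" "D \<noteq> 0" "X \<noteq> 0" "Y \<noteq> 0" "Z \<noteq> 0" "M \<noteq> 0"
    and e1: "A * Z = L * Y" and e2: "C * Z = X * B" and e3: "Y * M = X * D"
  shows "L / M = B / D * (A / C)"
proof -
  have hL: "L = A * Z / Y" using e1 assms by (simp add: field_simps)
  have hZ: "Z = X * B / C" using e2 assms by (simp add: field_simps)
  have hM: "M = X * D / Y" using e3 assms by (simp add: field_simps)
  have "L / M = (A * (X * B / C) / Y) / (X * D / Y)" unfolding hL hM hZ ..
  also have "\<dots> = B / D * (A / C)" using assms by (simp add: field_simps)
  finally show ?thesis .
qed

lemma alg2:
  fixes L M A B C D X Y W :: "'k::field"
  assumes "A \<noteq> 0" "B \<noteq> 0" "C \<noteq> 0" "D \<noteq> 0" "X \<noteq> 0" "Y \<noteq> 0" "W \<noteq> 0" "M \<noteq> 0"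
    and e1: "Y * L = X * B" and e2: "A * W = X * D" and e3: "C * W = M * Y"
  shows "L / M = B / D * (A / C)"
proof -
  have hL: "L = X * B / Y" using e1 assms by (simp add: field_simps)
  have hM: "M = C * W / Y" using e3 assms by (simp add: field_simps)
  have hW: "W = X * D / A" using e2 assms by (simp add: field_simps)
  have "L / M = (X * B / Y) / (C * (X * D / A) / Y)" unfolding hL hM hW ..
  also have "\<dots> = B / D * (A / C)" using assms by (simp add: field_simps)
  finally show ?thesis .
qed

theorem lemma2p1p1:
  fixes \<omega> :: "'a::{ab_group_add,finite} \<Rightarrow> 'a \<Rightarrow> 'a \<Rightarrow> 'k::alg_closed_field"
    and f :: "'b::{ab_group_add,finite} \<Rightarrow> 'a"
    and \<phi> :: "'b \<Rightarrow> 'b \<Rightarrow> 'k"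
  assumes cocycle: "normalized_3cocycle \<omega>"
    and hom: "\<And>x y. f (x + y) = f x + f y"
    and phi_units: "\<And>x y. \<phi> x y \<noteq> 0"
    and dphi: "\<And>x y z. d2 \<phi> x y z = inverse (\<omega> (f x) (f y) (f z))"
  shows "(\<forall>b b' k. f k = 0 \<longrightarrow> Bil \<phi> (b + b') k = Bil \<phi> b k * Bil \<phi> b' k) \<and>
         (\<forall>b k k'. f k = 0 \<longrightarrow> f k' = 0 \<longrightarrow> Bil \<phi> b (k + k') = Bil \<phi> b k * Bil \<phi> b k')"
proof -
  have norm: "\<And>a b c. (a = 0 \<or> b = 0 \<or> c = 0) \<Longrightarrow> \<omega> a b c = 1"
    using cocycle unfolding normalized_3cocycle_def by blast
  have E: "\<phi> b c * \<phi> a (b + c) = \<phi> (a + b) c * \<phi> a b"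
    if "f a = 0 \<or> f b = 0 \<or> f c = 0" for a b c
  proof -
    have "d2 \<phi> a b c = 1" using dphi[of a b c] norm that by simp
    then show ?thesis using phi_units[of "a+b" c] phi_units[of a b]
      unfolding d2_def by (simp add: field_simps)
  qed
  have P1: "Bil \<phi> (b + b') k = Bil \<phi> b k * Bil \<phi> b' k" if "f k = 0" for b b' k
  proof -
    have e1: "\<phi> b' k * \<phi> b (b' + k) = \<phi> (b + b') k * \<phi> b b'" using E[of b b' k] that by simp
    have e2: "\<phi> k b' * \<phi> b (b' + k) = \<phi> (b + k) b' * \<phi> b k"
      using E[of b k b'] that by (simp add: add.commute)
    have e3: "\<phi> b b' * \<phi> k (b + b') = \<phi> (b + k) b' * \<phi> k b"
      using E[of k b b'] that by (simp add: add.commute)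
    show ?thesis unfolding Bil_def
      by (rule alg1[where L="\<phi> (b + b') k" and M="\<phi> k (b + b')" and A="\<phi> b' k" and B="\<phi> b k"
            and C="\<phi> k b'" and D="\<phi> k b" and X="\<phi> (b + k) b'" and Y="\<phi> b b'" and Z="\<phi> b (b' + k)"])
        (rule phi_units | rule e1 | rule e2 | rule e3)+
  qed
  have P2: "Bil \<phi> b (k + k') = Bil \<phi> b k * Bil \<phi> b k'" if "f k = 0" "f k' = 0" for b k k'
  proof -
    have e1: "\<phi> k k' * \<phi> b (k + k') = \<phi> (b + k) k' * \<phi> b k" using E[of b k k'] that by simp
    have e2: "\<phi> b k' * \<phi> k (b + k') = \<phi> (b + k) k' * \<phi> k b"
      using E[of k b k'] that by (simp add: add.commute)
    have e3: "\<phi> k' b * \<phi> k (b + k') = \<phi> (k + k') b * \<phi> k k'"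
      using E[of k k' b] that by (simp add: add.commute)
    show ?thesis unfolding Bil_def
      by (rule alg2[where L="\<phi> b (k + k')" and M="\<phi> (k + k') b" and A="\<phi> b k'" and B="\<phi> b k"
            and C="\<phi> k' b" and D="\<phi> k b" and X="\<phi> (b + k) k'" and Y="\<phi> k k'" and W="\<phi> k (b + k')"])
        (rule phi_units | rule e1 | rule e2 | rule e3)+
  qed
  show ?thesis using P1 P2 by blast
qed

end
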